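(* Let $X$ be a binomial random variable with parameters $(n,p)\in\mathbb{N}^*\times(0,1)$. (i) For $a\in(0,1]$, $\mathbb{E}\big[(2X+1)^{-a}\big]\le\big(1\wedge\frac{1}{p(n+1)}\big)^a$. (ii) Let $f\in\mathcal{C}((0,1])$ be locally Lipschitz continuous and $b\in(0,1)$. Then \[ \mathbb{E}\Big[\Big|f\Big(\frac{2X+1}{2n+1}\Big)-f(p)\Big|\Big]\le\frac{\operatorname{ess\,sup}_{x\in(0,1]}|x^bf'(x)|}{1-b}\big(p^{-b/2}+p^{\frac12-b}\big)\,n^{-1/2}. \] *)

theory Defs
  imports "HOL-Probability.Probability"
begin

definition locally_lipschitz_on :: "real set \<Rightarrow> (real \<Rightarrow> real) \<Rightarrow> bool" where
  "locally_lipschitz_on S f \<longleftrightarrow>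
     (\<forall>x\<in>S. \<exists>e>0. \<exists>L. L-lipschitz_on (cball x e \<inter> S) f)"

end

theory Submission
  imports Defs
begin

lemma ae_deriv_mono:
  fixes g :: "real \<Rightarrow> real"
  assumes ab: "a \<le> b" and cont: "continuous_on {a..b} g" and negN: "negligible N"
    and deriv: "\<And>x. x \<in> {a<..<b} - N \<Longrightarrow> \<exists>D. (g has_real_derivative D) (at x) \<and> D \<le> 0"
    and lip: "\<And>x. x \<in> {a<..<b} \<inter> N \<Longrightarrow> \<exists>T B. open T \<and> x \<in> T \<and> (\<forall>y\<in>T \<inter> {a..b}. \<bar>g y - g x\<bar> \<le> B * \<bar>y - x\<bar>)"
  shows "g b \<le> g a"
proof -
  have main: "g b - e*b \<le> g a - e*a" if e: "e > 0" for e
  proof (rule ccontr)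
    define h where "h t = g t - e*t" for t
    assume "\<not> g b - e*b \<le> g a - e*a"
    then have hab: "h a < h b" by (simp add: h_def)
    have conth: "continuous_on {a..b} h" unfolding h_def
      by (intro continuous_on_diff cont continuous_on_mult continuous_on_const continuous_on_id)
    let ?S = "{a<..<b} \<inter> N"
    have neg: "negligible (h ` ?S)"
    proof (rule negligible_locally_Lipschitz_image)
      show "DIM(real) \<le> DIM(real)" by simp
      show "negligible ?S" by (rule negligible_subset[OF negN]) auto
      fix x assume x: "x \<in> ?S"
      then obtain T B where T: "open T" "x \<in> T" "\<forall>y\<in>T \<inter> {a..b}. \<bar>g y - g x\<bar> \<le> B * \<bar>y - x\<bar>"
        using lip by blast
      have "\<forall>y\<in>?S \<inter> T. norm (h y - h x) \<le> (B + e) * norm (y - x)"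
      proof
        fix y assume y: "y \<in> ?S \<inter> T"
        then have "y \<in> T \<inter> {a..b}" by auto
        then have 1: "\<bar>g y - g x\<bar> \<le> B * \<bar>y - x\<bar>" using T(3) by blast
        have "h y - h x = (g y - g x) - e * (y - x)" unfolding h_def by (simp add: algebra_simps)
        then have 2: "\<bar>h y - h x\<bar> \<le> \<bar>g y - g x\<bar> + e * \<bar>y - x\<bar>"
          using e abs_triangle_ineq4[of "g y - g x" "e*(y-x)"] by (simp add: abs_mult)
        show "norm (h y - h x) \<le> (B + e) * norm (y - x)"
          using 1 2 by (simp add: algebra_simps)
      qed
      then show "\<exists>T B. open T \<and> x \<in> T \<and> (\<forall>y\<in>?S \<inter> T. norm (h y - h x) \<le> B * norm (y - x))"
        using T(1,2) by blast
    qed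
    have "\<not> {h a<..<h b} \<subseteq> h ` ?S"
    proof
      assume "{h a<..<h b} \<subseteq> h ` ?S"
      then have "negligible {h a<..<h b}" by (rule negligible_subset[OF neg])
      then show False using hab negligible_interval(2)[of "h a" "h b"] by simp
    qed
    then obtain v where v: "h a < v" "v < h b" "v \<notin> h ` ?S"
      by (meson greaterThanLessThan_iff subsetI)
    define K where "K = {a..b} \<inter> h -` {..v}"
    have "closed K" unfolding K_def by (rule continuous_closed_preimage[OF conth]) auto
    then have "compact ({a..b} \<inter> K)" by (rule compact_Int_closed[OF compact_Icc])
    moreover have "{a..b} \<inter> K = K" unfolding K_def by blast
    ultimately have "compact K" by simp
    moreover have "a \<in> K" using ab v by (auto simp: K_def)
    ultimately obtain t0 where t0: "t0 \<in> K" "\<forall>t\<in>K. t \<le> t0"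
      using compact_attains_sup by blast
    have t0ab: "a \<le> t0" "t0 \<le> b" "h t0 \<le> v" using t0 by (auto simp: K_def)
    obtain t where t: "t0 \<le> t" "t \<le> b" "h t = v"
      using IVT'[of h t0 v b] t0ab v continuous_on_subset[OF conth, of "{t0..b}"] by force
    then have "t \<in> K" using t0ab by (auto simp: K_def)
    then have "t = t0" using t0 t by force
    then have ht0: "h t0 = v" using t by simp
    have "t0 \<noteq> a" "t0 \<noteq> b" using ht0 v by auto
    then have t0in: "t0 \<in> {a<..<b}" using t0ab by auto
    have "t0 \<notin> N" using t0in v ht0 by auto
    then obtain D where D: "(g has_real_derivative D) (at t0)" "D \<le> 0"
      using deriv t0in by blast
    have "(h has_real_derivative D - e) (at t0)" unfolding h_def
      using D(1) by (auto intro!: derivative_eq_intros)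
    moreover have "D - e < 0" using D e by simp
    ultimately obtain d where d: "d > 0" "\<forall>k>0. k < d \<longrightarrow> h t0 > h (t0 + k)"
      using DERIV_neg_dec_right by blast
    define k where "k = min (d/2) ((b - t0)/2)"
    have k1: "k \<le> (b - t0)/2" "k \<le> d/2" unfolding k_def by (rule min.cobounded2, rule min.cobounded1)
    have k: "k > 0" "k < d" "t0 + k \<le> b" using d t0in k1 by (auto simp: k_def)
    then have "h (t0 + k) < v" using d ht0 by auto
    then have "t0 + k \<in> K" using k t0ab by (auto simp: K_def)
    then show False using t0 k by force
  qed
  show ?thesis
  proof (rule field_le_epsilon)
    fix e :: real assume e: "e > 0"
    have "g b - g a \<le> (e / (b - a + 1)) * (b - a)"
      using main[of "e / (b - a + 1)"] e ab by (simp add: right_diff_distrib)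
    also have "\<dots> \<le> e" using e ab by (simp add: field_simps)
    finally show "g b \<le> g a + e" by simp
  qed
qed

lemma deriv_ptwise_lip:
  fixes k :: "real \<Rightarrow> real"
  assumes "(k has_real_derivative D) (at z)"
  shows "\<exists>T B. open T \<and> z \<in> T \<and> (\<forall>y\<in>T. \<bar>k y - k z\<bar> \<le> B * \<bar>y - z\<bar>)"
proof -
  have "((\<lambda>y. (k y - k z) / (y - z)) \<longlongrightarrow> D) (at z)"
    using has_field_derivative_iff[THEN iffD1, OF assms] .
  then have "\<forall>\<^sub>F y in at z. dist ((k y - k z) / (y - z)) D < 1"
    by (rule tendstoD) simp
  then obtain d where d: "d > 0" "\<forall>y. y \<noteq> z \<and> dist y z < d \<longrightarrow> dist ((k y - k z) / (y - z)) D < 1"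
    unfolding eventually_at by auto
  show ?thesis
  proof (intro exI[of _ "ball z d"] exI[of _ "\<bar>D\<bar> + 1"] conjI ballI)
    fix y assume y: "y \<in> ball z d"
    show "\<bar>k y - k z\<bar> \<le> (\<bar>D\<bar> + 1) * \<bar>y - z\<bar>"
    proof (cases "y = z")
      case False
      have "dist y z < d" using y by (simp add: dist_commute)
      then have "dist ((k y - k z) / (y - z)) D < 1" using d(2) False by blast
      then have "\<bar>(k y - k z) / (y - z) - D\<bar> < 1" by (simp add: dist_real_def)
      then have "\<bar>(k y - k z) / (y - z)\<bar> \<le> \<bar>D\<bar> + 1" by linarith
      moreover have eq: "(k y - k z) / (y - z) * (y - z) = k y - k z"
        using False by simp
      have "\<bar>(k y - k z) / (y - z)\<bar> * \<bar>y - z\<bar> = \<bar>k y - k z\<bar>"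
        by (simp only: abs_mult[symmetric] eq)
      moreover have "\<bar>(k y - k z) / (y - z)\<bar> * \<bar>y - z\<bar> \<le> (\<bar>D\<bar> + 1) * \<bar>y - z\<bar>"
        using calculation(1) by (rule mult_right_mono) simp
      ultimately show ?thesis by linarith
    qed simp
  qed (use d(1) in auto)
qed

lemma F_deriv:
  assumes "0 < t" "b < 1"
  shows "((\<lambda>t. t powr (1 - b) / (1 - b)) has_real_derivative t powr (- b)) (at t)"
proof -
  have "((\<lambda>t. t powr (1 - b) / (1 - b)) has_real_derivative ((1 - b) * t powr (1 - b - 1)) / (1 - b)) (at t)"
    by (intro DERIV_cdivide has_real_derivative_powr assms)
  moreover have "((1 - b) * t powr (1 - b - 1)) / (1 - b) = t powr (- b)"
    using assms by simp
  ultimately show ?thesis by simp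
qed

lemma key_bound_le:
  fixes f f' :: "real \<Rightarrow> real"
  assumes cont: "continuous_on {0<..1} f" and lip: "locally_lipschitz_on {0<..1} f"
    and negN: "negligible N"
    and der: "\<And>x. x \<in> {0<..1} - N \<Longrightarrow> (f has_real_derivative f' x) (at x) \<and> \<bar>x powr b * f' x\<bar> \<le> m"
    and b: "0 < b" "b < 1" and xy: "0 < x" "x \<le> y" "y \<le> 1" and sg: "s = 1 \<or> s = -1"
  shows "s * (f y - f x) \<le> m * (y powr (1 - b) / (1 - b) - x powr (1 - b) / (1 - b))"
proof -
  define F where "F t = t powr (1 - b) / (1 - b)" for t
  define g where "g t = s * f t - m * F t" for t
  have dF: "(F has_real_derivative t powr (- b)) (at t)" if "0 < t" for t
    unfolding F_def using F_deriv[OF that b(2)] .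
  have "g y \<le> g x"
  proof (rule ae_deriv_mono[OF xy(2) _ negN])
    have "continuous_on {x..y} f" by (rule continuous_on_subset[OF cont]) (use xy in auto)
    moreover have "continuous_on {x..y} F"
    proof (rule continuous_at_imp_continuous_on, rule ballI)
      fix t assume "t \<in> {x..y}"
      then have "t > 0" using xy by auto
      then show "isCont F t" using dF DERIV_isCont by blast
    qed
    ultimately show "continuous_on {x..y} g" unfolding g_def
      by (intro continuous_on_diff continuous_on_mult continuous_on_const)
  next
    fix t assume t: "t \<in> {x<..<y} - N"
    then have t01: "t \<in> {0<..1} - N" using xy by auto
    then have df: "(f has_real_derivative f' t) (at t)" and bd: "\<bar>t powr b * f' t\<bar> \<le> m"
      using der by auto
    have tpos: "t > 0" using t01 by auto
    have "(g has_real_derivative s * f' t - m * t powr (- b)) (at t)"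
      unfolding g_def by (intro DERIV_diff DERIV_cmult df dF tpos)
    moreover have "s * f' t - m * t powr (- b) \<le> 0"
    proof -
      have h1: "t powr b * t powr (- b) = 1" using tpos by (simp add: powr_add[symmetric])
      have "(s * (t powr b * f' t) - m) * t powr (- b) = s * f' t * (t powr b * t powr (- b)) - m * t powr (- b)"
        by (simp add: algebra_simps)
      also have "\<dots> = s * f' t - m * t powr (- b)" by (simp only: h1 mult_1_right)
      finally have eq: "s * f' t - m * t powr (- b) = (s * (t powr b * f' t) - m) * t powr (- b)" by simp
      have "s * (t powr b * f' t) \<le> m" using bd sg by auto
      then show ?thesis unfolding eq by (intro mult_nonpos_nonneg) auto
    qed
    ultimately show "\<exists>D. (g has_real_derivative D) (at t) \<and> D \<le> 0" by blast
  next
    fix t assume t: "t \<in> {x<..<y} \<inter> N"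
    then have t01: "t \<in> {0<..1}" using xy by auto
    have "\<exists>e>0. \<exists>L. L-lipschitz_on (cball t e \<inter> {0<..1}) f"
      using bspec[OF lip[unfolded locally_lipschitz_on_def] t01] .
    then obtain e L where e: "e > 0" and L: "L-lipschitz_on (cball t e \<inter> {0<..1}) f"
      by (elim exE conjE)
    obtain T2 B2 where T2: "open T2" "t \<in> T2" "\<forall>y\<in>T2. \<bar>F y - F t\<bar> \<le> B2 * \<bar>y - t\<bar>"
      using deriv_ptwise_lip[OF dF[of t]] t01 by auto
    have "\<forall>z\<in>(ball t e \<inter> T2) \<inter> {x..y}. \<bar>g z - g t\<bar> \<le> (L + \<bar>m\<bar> * B2) * \<bar>z - t\<bar>"
    proof
      fix z assume z: "z \<in> (ball t e \<inter> T2) \<inter> {x..y}"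
      then have "z \<in> cball t e \<inter> {0<..1}" using xy by auto
      then have "dist (f z) (f t) \<le> L * dist z t"
        using lipschitz_onD[OF L] t01 e by auto
      then have 1: "\<bar>f z - f t\<bar> \<le> L * \<bar>z - t\<bar>" by (simp add: dist_real_def)
      have 2: "\<bar>F z - F t\<bar> \<le> B2 * \<bar>z - t\<bar>" using T2 z by blast
      have "g z - g t = s * (f z - f t) - m * (F z - F t)" unfolding g_def by (simp add: algebra_simps)
      then have "\<bar>g z - g t\<bar> \<le> \<bar>s\<bar> * \<bar>f z - f t\<bar> + \<bar>m\<bar> * \<bar>F z - F t\<bar>"
        by (metis abs_mult abs_triangle_ineq4)
      also have "\<dots> = \<bar>f z - f t\<bar> + \<bar>m\<bar> * \<bar>F z - F t\<bar>" using sg by auto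
      also have "\<dots> \<le> L * \<bar>z - t\<bar> + \<bar>m\<bar> * (B2 * \<bar>z - t\<bar>)"
        using 1 2 by (intro add_mono mult_left_mono) auto
      finally show "\<bar>g z - g t\<bar> \<le> (L + \<bar>m\<bar> * B2) * \<bar>z - t\<bar>" by (simp add: algebra_simps)
    qed
    moreover have "open (ball t e \<inter> T2)" "t \<in> ball t e \<inter> T2" using T2 e by auto
    ultimately show "\<exists>T B. open T \<and> t \<in> T \<and> (\<forall>z\<in>T \<inter> {x..y}. \<bar>g z - g t\<bar> \<le> B * \<bar>z - t\<bar>)"
      by blast
  qed
  then show ?thesis unfolding g_def F_def by (simp add: algebra_simps)
qed


lemma binom_exp_Suc:
  fixes h :: "nat \<Rightarrow> real"
  assumes p: "p \<in> {0..1}"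
  shows "measure_pmf.expectation (binomial_pmf (Suc n) p) h =
     p * measure_pmf.expectation (binomial_pmf n p) (\<lambda>k. h (k + 1)) + (1 - p) * measure_pmf.expectation (binomial_pmf n p) h"
proof -
  have eq: "binomial_pmf (Suc n) p = bernoulli_pmf p \<bind> (\<lambda>b. map_pmf (\<lambda>k. (if b then 1 else 0) + k) (binomial_pmf n p))"
    unfolding binomial_pmf_Suc[OF p] map_pmf_def by simp
  have "measure_pmf.expectation (binomial_pmf (Suc n) p) h =
    (\<Sum>b\<in>UNIV. pmf (bernoulli_pmf p) b *\<^sub>R measure_pmf.expectation (map_pmf (\<lambda>k. (if b then 1 else 0) + k) (binomial_pmf n p)) h)"
    unfolding eq by (rule pmf_expectation_bind) (use p finite_set_pmf_binomial_pmf[OF p, of n] in auto)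
  also have "\<dots> = p * measure_pmf.expectation (binomial_pmf n p) (\<lambda>k. h (k + 1)) + (1 - p) * measure_pmf.expectation (binomial_pmf n p) h"
    using p by (simp add: UNIV_bool add.commute)
  finally show ?thesis .
qed

lemma binom_mean:
  assumes p: "p \<in> {0..1}"
  shows "measure_pmf.expectation (binomial_pmf n p) (\<lambda>k. real k) = real n * p"
proof (induction n)
  case 0
  then show ?case using p by (simp add: binomial_pmf_0)
next
  case (Suc n)
  have "measure_pmf.expectation (binomial_pmf n p) (\<lambda>k. real (k + 1)) = 
        measure_pmf.expectation (binomial_pmf n p) (\<lambda>k. real k) + 1"
    using p by (simp add: integral_add)
  then show ?case using Suc p by (simp add: binom_exp_Suc algebra_simps)
qed

lemma binom_sq:
  assumes p: "p \<in> {0..1}"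
  shows "measure_pmf.expectation (binomial_pmf n p) (\<lambda>k. (real k)^2) = real n * p * (1 - p) + (real n * p)^2"
proof (induction n)
  case 0
  then show ?case using p by (simp add: binomial_pmf_0)
next
  case (Suc n)
  have "measure_pmf.expectation (binomial_pmf n p) (\<lambda>k. (real (k + 1))^2) = 
        measure_pmf.expectation (binomial_pmf n p) (\<lambda>k. (real k)^2 + 2 * real k + 1)"
    by (simp add: power2_eq_square algebra_simps)
  also have "\<dots> = measure_pmf.expectation (binomial_pmf n p) (\<lambda>k. (real k)^2) + 2 * measure_pmf.expectation (binomial_pmf n p) (\<lambda>k. real k) + 1"
    using p by (simp add: integral_add)
  finally show ?case using Suc p by (simp add: binom_exp_Suc binom_mean algebra_simps power2_eq_square)
qed


lemma powr_diff_le_aux: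
  fixes u v c :: real
  assumes "0 < v" "v \<le> u" "0 < c" "c \<le> 1"
  shows "u powr c - v powr c \<le> (u - v) * u powr (c - 1)"
proof -
  define q where "q = v / u"
  have u: "u > 0" using assms by simp
  have q: "0 < q" "q \<le> 1" using assms by (auto simp: q_def)
  have vq: "v = q * u" using u by (simp add: q_def)
  have "q \<le> q powr c" using powr_mono'[of c 1 q] q assms by simp
  have "u powr c - v powr c = u powr c * (1 - q powr c)"
    unfolding vq using q u by (simp add: powr_mult algebra_simps)
  also have "\<dots> \<le> u powr c * (1 - q)"
    using \<open>q \<le> q powr c\<close> by (intro mult_left_mono) auto
  also have "u powr c * (1 - q) = (u - v) * (u powr c / u)"
    using u by (simp add: q_def field_simps)
  also have "u powr c / u = u powr (c - 1)"
    using u by (simp add: powr_diff)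
  finally show ?thesis .
qed

lemma powr_diff_le:
  fixes x p c :: real
  assumes "0 < x" "0 < p" "0 < c" "c \<le> 1"
  shows "\<bar>x powr c - p powr c\<bar> \<le> p powr (c - 1) * \<bar>x - p\<bar>"
proof (cases "p \<le> x")
  case True
  have "x powr c - p powr c \<le> (x - p) * x powr (c - 1)"
    using powr_diff_le_aux[of p x c] assms True by simp
  also have "\<dots> \<le> (x - p) * p powr (c - 1)"
    using True assms by (intro mult_left_mono powr_mono2') auto
  finally have "x powr c - p powr c \<le> (x - p) * p powr (c - 1)" .
  moreover have "p powr c \<le> x powr c" using True assms by (intro powr_mono2) auto
  ultimately show ?thesis using True by (simp add: mult.commute)
next
  case False
  have "p powr c - x powr c \<le> (p - x) * p powr (c - 1)"
    using powr_diff_le_aux[of x p c] assms False by simp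
  moreover have "x powr c \<le> p powr c" using False assms by (intro powr_mono2) auto
  ultimately show ?thesis using False by (simp add: mult.commute)
qed


lemma binom_var:
  assumes p: "p \<in> {0..1}"
  shows "measure_pmf.expectation (binomial_pmf n p) (\<lambda>k. (real k - real n * p)^2) = real n * p * (1 - p)"
proof -
  let ?E = "measure_pmf.expectation (binomial_pmf n p)"
  let ?c = "real n * p"
  have "?E (\<lambda>k. (real k - ?c)^2) = ?E (\<lambda>k. (real k)^2 + (- 2 * ?c) * real k + ?c^2)"
    by (simp add: power2_eq_square algebra_simps)
  also have "\<dots> = ?E (\<lambda>k. (real k)^2) + (- 2 * ?c) * ?E (\<lambda>k. real k) + ?c^2"
    using p by (simp add: integral_add)
  also have "\<dots> = real n * p * (1 - p)"
    using p binom_sq[OF p, of n] binom_mean[OF p, of n] by (simp add: power2_eq_square algebra_simps)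
  finally show ?thesis .
qed


lemma alg1:
  fixes P Z s D :: real
  assumes "s > 0" "D > 0"
  shows "P * ((Z / s + s + 1) / D) = (P / (D * s)) * Z + P * (s + 1) / D"
  using assms by (simp add: field_simps)

lemma alg2:
  fixes P s D :: real
  assumes "s > 0" "D > 0"
  shows "P / (D * s) * (s * s) + P * (s + 1) / D = P * (2 * s) / D + P / D"
  using assms by (simp add: field_simps)

lemma binom_dev_bound:
  assumes n: "n \<ge> 1" and p: "0 < p" "p < 1" and b: "0 < b" "b < 1"
  shows "measure_pmf.expectation (binomial_pmf n p)
           (\<lambda>k. \<bar>((2 * real k + 1) / (2 * real n + 1)) powr (1 - b) - p powr (1 - b)\<bar>)
         \<le> (p powr (-b/2) + p powr (1/2 - b)) * real n powr (-1/2)"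
proof -
  have p01: "p \<in> {0..1}" using p by auto
  let ?E = "measure_pmf.expectation (binomial_pmf n p)"
  define Y where "Y k = (2 * real k + 1) / (2 * real n + 1)" for k
  define r where "r = p powr (-b/2) * real n powr (-1/2)"
  define q where "q = p powr (1/2 - b) * real n powr (-1/2)"
  have Ypos: "0 < Y k" for k unfolding Y_def by (simp add: add_pos_nonneg)
  have Yle: "Y k \<le> 1" if "k \<in> set_pmf (binomial_pmf n p)" for k
    using that p unfolding Y_def by simp
  have npos: "real n > 0" using n by simp
  have rpos: "r > 0" unfolding r_def using p npos by simp
  have qpos: "q \<ge> 0" unfolding q_def by simp
  have goal_eq: "(p powr (-b/2) + p powr (1/2 - b)) * real n powr (-1/2) = r + q"
    unfolding r_def q_def by (simp add: algebra_simps)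
  have "?E (\<lambda>k. \<bar>Y k powr (1 - b) - p powr (1 - b)\<bar>) \<le> r + q"
  proof (cases "r \<ge> 1")
    case True
    have "?E (\<lambda>k. \<bar>Y k powr (1 - b) - p powr (1 - b)\<bar>) \<le> ?E (\<lambda>k. 1::real)"
    proof (rule integral_mono_AE)
      show "AE k in measure_pmf (binomial_pmf n p). \<bar>Y k powr (1 - b) - p powr (1 - b)\<bar> \<le> 1"
      proof (rule AE_pmfI)
        fix k assume k: "k \<in> set_pmf (binomial_pmf n p)"
        have "Y k powr (1 - b) \<le> 1" using Yle[OF k] Ypos[of k] b by (intro powr_le1) auto
        moreover have "p powr (1 - b) \<le> 1" using p b by (intro powr_le1) auto
        moreover have "0 \<le> Y k powr (1 - b)" "0 \<le> p powr (1 - b)" by simp_all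
        ultimately show "\<bar>Y k powr (1 - b) - p powr (1 - b)\<bar> \<le> 1" by linarith
      qed
    qed (use p01 in auto)
    also have "?E (\<lambda>k. 1::real) = 1" by (simp add: measure_pmf.prob_space)
    finally show ?thesis using True qpos by linarith
  next
    case False
    define s where "s = sqrt (real n * p)"
    have s: "s > 0" unfolding s_def using npos p by simp
    have s2: "s * s = real n * p" unfolding s_def using npos p by simp
    let ?g = "\<lambda>k. (p powr (-b) / ((2 * real n + 1) * s)) * (real k - real n * p)^2 + p powr (-b) * (s + 1) / (2 * real n + 1)"
    have "?E (\<lambda>k. \<bar>Y k powr (1 - b) - p powr (1 - b)\<bar>) \<le> ?E ?g"
    proof (rule integral_mono_AE)
      show "AE k in measure_pmf (binomial_pmf n p). \<bar>Y k powr (1 - b) - p powr (1 - b)\<bar> \<le> ?g k"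
      proof (rule AE_pmfI)
        fix k assume k: "k \<in> set_pmf (binomial_pmf n p)"
        define z where "z = real k - real n * p"
        have 1: "\<bar>Y k powr (1 - b) - p powr (1 - b)\<bar> \<le> p powr (-b) * \<bar>Y k - p\<bar>"
          using powr_diff_le[of "Y k" p "1 - b"] Ypos[of k] p b by simp
        have "Y k - p = (2 * z + (1 - p)) / (2 * real n + 1)"
          unfolding Y_def z_def by (simp add: field_simps)
        then have "\<bar>Y k - p\<bar> = \<bar>2 * z + (1 - p)\<bar> / (2 * real n + 1)"
          by (simp add: abs_divide)
        also have "\<dots> \<le> (z^2 / s + s + 1) / (2 * real n + 1)"
        proof (rule divide_right_mono)
          have "0 \<le> (\<bar>z\<bar> - s)^2" by simp
          then have "2 * s * \<bar>z\<bar> \<le> z^2 + s * s" by (simp add: power2_eq_square algebra_simps)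
          then have "2 * \<bar>z\<bar> \<le> (z^2 + s * s) / s" using s by (simp add: field_simps)
          also have "(z^2 + s * s) / s = z^2 / s + s" using s by (simp add: field_simps)
          finally have "2 * \<bar>z\<bar> \<le> z^2 / s + s" .
          then show "\<bar>2 * z + (1 - p)\<bar> \<le> z^2 / s + s + 1" using p by linarith
        qed simp
        finally have 2: "\<bar>Y k - p\<bar> \<le> (z^2 / s + s + 1) / (2 * real n + 1)" .
        have "p powr (-b) * \<bar>Y k - p\<bar> \<le> p powr (-b) * ((z^2 / s + s + 1) / (2 * real n + 1))"
          using 2 by (intro mult_left_mono) auto
        also have "\<dots> = ?g k" unfolding z_def
          by (rule alg1) (use s npos in auto)
        finally show "\<bar>Y k powr (1 - b) - p powr (1 - b)\<bar> \<le> ?g k" using 1 by linarith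
      qed
    qed (use p01 in auto)
    also have "?E ?g = (p powr (-b) / ((2 * real n + 1) * s)) * ?E (\<lambda>k. (real k - real n * p)^2) + p powr (-b) * (s + 1) / (2 * real n + 1)"
      using p01 by (simp add: integral_add)
    also have "\<dots> = (p powr (-b) / ((2 * real n + 1) * s)) * (real n * p * (1 - p)) + p powr (-b) * (s + 1) / (2 * real n + 1)"
      using binom_var[OF p01, of n] by simp
    also have "\<dots> \<le> (p powr (-b) / ((2 * real n + 1) * s)) * (s * s) + p powr (-b) * (s + 1) / (2 * real n + 1)"
      unfolding s2 using p npos s by (intro add_right_mono mult_left_mono) (auto simp: mult_le_cancel_left1)
    also have "\<dots> = p powr (-b) * (2 * s) / (2 * real n + 1) + p powr (-b) / (2 * real n + 1)"
      by (rule alg2) (use s npos in auto)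
    also have "\<dots> \<le> q + r"
    proof (rule add_mono)
      have "p powr (-b) * (2 * s) / (2 * real n + 1) \<le> p powr (-b) * (2 * s) / (2 * real n)"
        using npos s by (intro divide_left_mono mult_nonneg_nonneg) auto
      also have "\<dots> = p powr (-b) * s / real n" using npos by simp
      also have "\<dots> = q"
      proof -
        have "s = sqrt p * sqrt (real n)" unfolding s_def by (simp add: real_sqrt_mult)
        then have "s / real n = sqrt p / sqrt (real n)"
          using npos by (simp add: field_simps)
        moreover have "sqrt p = p powr (1/2)" using p by (simp add: powr_half_sqrt)
        moreover have "1 / sqrt (real n) = real n powr (-1/2)"
          using npos by (simp add: powr_minus_divide powr_half_sqrt)
        moreover have "p powr (-b) * p powr (1/2) = p powr (1/2 - b)"
          by (simp add: powr_add[symmetric])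
        ultimately show ?thesis unfolding q_def
          by (metis (no_types, lifting) mult.assoc times_divide_eq_right mult_1_right)
      qed
      finally show "p powr (-b) * (2 * s) / (2 * real n + 1) \<le> q" .
    next
      have "p powr (-b) / (2 * real n + 1) \<le> p powr (-b) / real n"
        using npos by (intro divide_left_mono) auto
      also have "\<dots> = r * r"
      proof -
        have "p powr (-b/2) * p powr (-b/2) = p powr (-b)" by (simp add: powr_add[symmetric])
        moreover have "real n powr (-1/2) * real n powr (-1/2) = 1 / real n"
          using npos by (simp add: powr_add[symmetric] powr_minus_divide)
        ultimately show ?thesis unfolding r_def by (simp add: algebra_simps)
      qed
      also have "\<dots> \<le> r" using False rpos by (simp add: mult_le_cancel_right1)
      finally show "p powr (-b) / (2 * real n + 1) \<le> r" .
    qed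
    finally show ?thesis by simp
  qed
  then show ?thesis unfolding goal_eq Y_def .
qed


lemma alg3:
  fixes X N p P Q :: real
  assumes "p > 0" "N \<ge> 0"
  shows "X / (N + 1) * P * Q = X * (p * P) * Q / (p * (N + 1))"
proof -
  have "N * p \<ge> 0" using assms by simp
  then have "p + N * p \<noteq> 0" "N + 1 \<noteq> 0" using assms by linarith+
  then show ?thesis using assms by (simp add: field_simps)
qed

lemma binom_inv_sum:
  assumes p: "0 < p" "p < 1"
  shows "measure_pmf.expectation (binomial_pmf n p) (\<lambda>k. 1 / (real k + 1)) \<le> 1 / (p * (real n + 1))"
proof -
  have p01: "p \<in> {0..1}" using p by auto
  define g where "g j = real (Suc n choose j) * p ^ j * (1 - p) ^ (Suc n - j)" for j
  have trm: "(real (n choose k) * p ^ k * (1 - p) ^ (n - k)) *\<^sub>R (1 / (real k + 1)) = g (Suc k) / (p * (real n + 1))"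
    if "k \<le> n" for k
  proof -
    have "real (Suc n) * real (n choose k) = real (Suc n choose Suc k) * real (Suc k)"
      using Suc_times_binomial_eq[of n k] by (metis of_nat_mult)
    then have c: "real (n choose k) / (real k + 1) = real (Suc n choose Suc k) / (real n + 1)"
      by (simp add: field_simps)
    have "(real (n choose k) * p ^ k * (1 - p) ^ (n - k)) *\<^sub>R (1 / (real k + 1))
          = (real (n choose k) / (real k + 1)) * p ^ k * (1 - p) ^ (n - k)" by simp
    also have "\<dots> = real (Suc n choose Suc k) / (real n + 1) * p ^ k * (1 - p) ^ (n - k)" by (simp only: c)
    also have "\<dots> = g (Suc k) / (p * (real n + 1))"
      unfolding g_def using alg3[of p "real n"] p by (simp del: binomial_Suc_Suc)
    finally show ?thesis .
  qed
  have "measure_pmf.expectation (binomial_pmf n p) (\<lambda>k. 1 / (real k + 1)) = (\<Sum>k\<le>n. g (Suc k)) / (p * (real n + 1))"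
    unfolding expectation_binomial_pmf'[OF p01] sum_divide_distrib by (rule sum.cong[OF refl], rule trm) simp
  also have "(\<Sum>k\<le>n. g (Suc k)) = (\<Sum>j\<le>Suc n. g j) - g 0"
    by (simp only: sum.atMost_Suc_shift)
  also have "(\<Sum>j\<le>Suc n. g j) = 1"
    using binomial_ring[of p "1 - p" "Suc n"] unfolding g_def by simp
  also have "g 0 \<ge> 0" unfolding g_def using p by simp
  then have "(1 - g 0) / (p * (real n + 1)) \<le> 1 / (p * (real n + 1))"
    using p by (intro divide_right_mono) auto
  finally show ?thesis .
qed

lemma part1:
  assumes p: "0 < p" "p < 1" and a: "0 < a" "a \<le> 1"
  shows "measure_pmf.expectation (binomial_pmf n p) (\<lambda>k. (2 * real k + 1) powr (-a))
           \<le> (min 1 (1 / (p * (real n + 1)))) powr a"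
proof -
  have p01: "p \<in> {0..1}" using p by auto
  let ?E = "measure_pmf.expectation (binomial_pmf n p)"
  define c where "c = 1 / (p * (real n + 1))"
  have c: "c > 0" unfolding c_def using p by simp
  have pw: "(2 * real k + 1) powr (-a) = (1 / (2 * real k + 1)) powr a" for k
    by (simp add: powr_minus_divide powr_divide)
  have le1: "?E (\<lambda>k. (2 * real k + 1) powr (-a)) \<le> 1"
  proof -
    have "?E (\<lambda>k. (2 * real k + 1) powr (-a)) \<le> ?E (\<lambda>k. 1::real)"
    proof (rule integral_mono)
      fix k :: nat
      have "1 \<le> (2 * real k + 1) powr a" by (rule ge_one_powr_ge_zero) (use a in auto)
      then show "(2 * real k + 1) powr (-a) \<le> 1" by (simp add: powr_minus_divide)
    qed (use p01 in auto)
    also have "?E (\<lambda>k. 1::real) = 1" by (simp add: measure_pmf.prob_space)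
    finally show ?thesis .
  qed
  have lec: "?E (\<lambda>k. (2 * real k + 1) powr (-a)) \<le> c powr a"
  proof -
    let ?h = "\<lambda>k. (a / c powr (1 - a)) * (1 / (2 * real k + 1)) + (1 - a) * c / c powr (1 - a)"
    have "?E (\<lambda>k. (2 * real k + 1) powr (-a)) \<le> ?E ?h"
    proof (rule integral_mono)
      fix k :: nat
      define t where "t = 1 / (2 * real k + 1)"
      have t: "t > 0" unfolding t_def by (simp add: add_pos_nonneg)
      have "t powr a * c powr (1 - a) \<le> a * t + (1 - a) * c"
        using Youngs_inequality_0[of a "1 - a" t c] a t c by simp
      moreover have "c powr (1 - a) > 0" using c by simp
      ultimately have "t powr a \<le> (a * t + (1 - a) * c) / c powr (1 - a)"
        by (simp add: field_simps)
      also have "\<dots> = ?h k" unfolding t_def by (simp add: add_divide_distrib)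
      finally show "(2 * real k + 1) powr (-a) \<le> ?h k" unfolding pw t_def .
    qed (use p01 in auto)
    also have "?E ?h = ?E (\<lambda>k. (a / c powr (1 - a)) * (1 / (2 * real k + 1))) + ?E (\<lambda>k. (1 - a) * c / c powr (1 - a))"
      by (rule Bochner_Integration.integral_add[where f="\<lambda>k. (a / c powr (1 - a)) * (1 / (2 * real k + 1))" and g="\<lambda>k. (1 - a) * c / c powr (1 - a)"]) (use p01 in auto)
    also have "?E (\<lambda>k. (a / c powr (1 - a)) * (1 / (2 * real k + 1))) = (a / c powr (1 - a)) * ?E (\<lambda>k. 1 / (2 * real k + 1))"
      by (rule integral_mult_right_zero)
    also have "?E (\<lambda>k. (1 - a) * c / c powr (1 - a)) = (1 - a) * c / c powr (1 - a)"
      by (simp add: measure_pmf.prob_space)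
    also have "?E (\<lambda>k. 1 / (2 * real k + 1)) \<le> c"
    proof -
      have "?E (\<lambda>k. 1 / (2 * real k + 1)) \<le> ?E (\<lambda>k. 1 / (real k + 1))"
        by (rule integral_mono) (use p01 in \<open>auto intro!: divide_left_mono\<close>)
      also have "\<dots> \<le> c" unfolding c_def by (rule binom_inv_sum[OF p])
      finally show ?thesis .
    qed
    then have "(a / c powr (1 - a)) * ?E (\<lambda>k. 1 / (2 * real k + 1)) + (1 - a) * c / c powr (1 - a)
             \<le> (a / c powr (1 - a)) * c + (1 - a) * c / c powr (1 - a)"
      using a c by (intro add_right_mono mult_left_mono) auto
    also have "\<dots> = c / c powr (1 - a)" by (simp add: add_divide_distrib[symmetric] algebra_simps)
    also have "\<dots> = c powr a" using c by (simp add: powr_diff)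
    finally show ?thesis .
  qed
  have "min 1 (1 / (p * (real n + 1))) = min 1 c" by (simp add: c_def)
  moreover have "measure_pmf.expectation (binomial_pmf n p) (\<lambda>k. (2 * real k + 1) powr (-a)) \<le> (min 1 c) powr a"
  proof (cases "c \<le> 1")
    case True
    then have "min 1 c = c" by simp
    then show ?thesis using lec by simp
  next
    case False
    then have "min 1 c = 1" by simp
    then show ?thesis using le1 by simp
  qed
  ultimately show ?thesis by simp
qed


lemma key_abs:
  fixes f f' :: "real \<Rightarrow> real"
  assumes cont: "continuous_on {0<..1} f" and lip: "locally_lipschitz_on {0<..1} f"
    and negN: "negligible N"
    and der: "\<And>x. x \<in> {0<..1} - N \<Longrightarrow> (f has_real_derivative f' x) (at x) \<and> \<bar>x powr b * f' x\<bar> \<le> m"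
    and b: "0 < b" "b < 1" and xy: "0 < x" "x \<le> 1" "0 < y" "y \<le> 1"
  shows "\<bar>f y - f x\<bar> \<le> m * \<bar>y powr (1 - b) - x powr (1 - b)\<bar> / (1 - b)"
proof -
  have gen: "\<bar>f v - f u\<bar> \<le> m * (v powr (1 - b) - u powr (1 - b)) / (1 - b)"
    if "0 < u" "u \<le> v" "v \<le> 1" for u v
  proof -
    have "1 * (f v - f u) \<le> m * (v powr (1 - b) / (1 - b) - u powr (1 - b) / (1 - b))"
      by (rule key_bound_le[OF cont lip negN der b that]) auto
    moreover have "-1 * (f v - f u) \<le> m * (v powr (1 - b) / (1 - b) - u powr (1 - b) / (1 - b))"
      by (rule key_bound_le[OF cont lip negN der b that]) auto
    moreover have "v powr (1 - b) / (1 - b) - u powr (1 - b) / (1 - b) = (v powr (1 - b) - u powr (1 - b)) / (1 - b)"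
      by (simp add: diff_divide_distrib)
    ultimately show ?thesis by (simp add: abs_le_iff)
  qed
  show ?thesis
  proof (cases "x \<le> y")
    case True
    have "x powr (1 - b) \<le> y powr (1 - b)" using True xy b by (intro powr_mono2) auto
    then show ?thesis using gen[of x y] True xy by simp
  next
    case False
    have "y powr (1 - b) \<le> x powr (1 - b)" using False xy b by (intro powr_mono2) auto
    then show ?thesis using gen[of y x] False xy by (simp add: abs_minus_commute)
  qed
qed


theorem lemma8p2:
  fixes n :: nat and p :: real
  assumes "n \<ge> 1" and "0 < p" and "p < 1"
  shows
   "(\<forall>a::real. 0 < a \<and> a \<le> 1 \<longrightarrow>
       measure_pmf.expectation (binomial_pmf n p) (\<lambda>k. (2 * real k + 1) powr (-a))
         \<le> (min 1 (1 / (p * (real n + 1)))) powr a)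
    \<and>
    (\<forall>(f::real \<Rightarrow> real) (f'::real \<Rightarrow> real) (b::real).
       continuous_on {0<..1} f \<and> locally_lipschitz_on {0<..1} f \<and>
       f' \<in> borel_measurable (lebesgue_on {0<..1}) \<and>
       (AE x in lebesgue_on {0<..1}. (f has_real_derivative f' x) (at x)) \<and>
       0 < b \<and> b < 1 \<longrightarrow>
       ereal (measure_pmf.expectation (binomial_pmf n p)
                (\<lambda>k. \<bar>f ((2 * real k + 1) / (2 * real n + 1)) - f p\<bar>))
         \<le> esssup (lebesgue_on {0<..1}) (\<lambda>x. ereal \<bar>x powr b * f' x\<bar>)
            * ereal ((p powr (-b/2) + p powr (1/2 - b)) * real n powr (-1/2) / (1 - b)))"
proof (intro conjI allI impI)
  fix a :: real assume "0 < a \<and> a \<le> 1"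
  then show "measure_pmf.expectation (binomial_pmf n p) (\<lambda>k. (2 * real k + 1) powr (-a))
         \<le> (min 1 (1 / (p * (real n + 1)))) powr a"
    using part1[of p a n] assms by auto
next
  fix f f' :: "real \<Rightarrow> real" and b :: real
  assume H: "continuous_on {0<..1} f \<and> locally_lipschitz_on {0<..1} f \<and>
       f' \<in> borel_measurable (lebesgue_on {0<..1}) \<and>
       (AE x in lebesgue_on {0<..1}. (f has_real_derivative f' x) (at x)) \<and>
       0 < b \<and> b < 1"
  then have cont: "continuous_on {0<..1} f" and lip: "locally_lipschitz_on {0<..1} f"
    and aed: "AE x in lebesgue_on {0<..1}. (f has_real_derivative f' x) (at x)"
    and b: "0 < b" "b < 1" by auto
  have p01: "p \<in> {0..1}" using assms by auto
  define M where "M = esssup (lebesgue_on {0<..1}) (\<lambda>x. ereal \<bar>x powr b * f' x\<bar>)"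
  define R where "R = (p powr (-b/2) + p powr (1/2 - b)) * real n powr (-1/2)"
  let ?P = "\<lambda>x. (f has_real_derivative f' x) (at x) \<and> ereal \<bar>x powr b * f' x\<bar> \<le> M"
  have "AE x in lebesgue_on {0<..1}. ?P x"
    using aed esssup_AE[of "\<lambda>x. ereal \<bar>x powr b * f' x\<bar>" "lebesgue_on {0<..1}"]
    unfolding M_def by eventually_elim auto
  then have "AE x in lebesgue. x \<in> {0<..1} \<longrightarrow> ?P x"
    by (subst (asm) AE_restrict_space_iff) auto
  then obtain N where N: "{x \<in> space lebesgue. \<not> (x \<in> {0<..1} \<longrightarrow> ?P x)} \<subseteq> N"
      "emeasure lebesgue N = 0" "N \<in> sets lebesgue"
    by (rule AE_E)
  have negN: "negligible N" using N(2,3) by (simp add: negligible_iff_emeasure0)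
  have good: "?P x" if "x \<in> {0<..1} - N" for x using N(1) that by auto
  obtain x0 where x0: "x0 \<in> {0<..1} - N"
  proof -
    have "\<not> {0<..<1::real} \<subseteq> N"
    proof
      assume "{0<..<1::real} \<subseteq> N"
      then have "negligible {0<..<1::real}" by (rule negligible_subset[OF negN])
      then show False using negligible_interval(2)[of "0::real" 1] by simp
    qed
    then obtain x where "x \<in> {0<..<1::real}" "x \<notin> N" by blast
    then show ?thesis using that[of x] by auto
  qed
  have Rpos: "R > 0" unfolding R_def using assms by (simp add: add_pos_pos)
  have main: "ereal (measure_pmf.expectation (binomial_pmf n p)
                (\<lambda>k. \<bar>f ((2 * real k + 1) / (2 * real n + 1)) - f p\<bar>)) \<le> M * ereal (R / (1 - b))"
  proof (cases M)
    case (real m)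
    have mnn: "m \<ge> 0" using good[OF x0] real by auto
    have der: "(f has_real_derivative f' x) (at x) \<and> \<bar>x powr b * f' x\<bar> \<le> m" if "x \<in> {0<..1} - N" for x
      using good[OF that] real by auto
    let ?E = "measure_pmf.expectation (binomial_pmf n p)"
    have "?E (\<lambda>k. \<bar>f ((2 * real k + 1) / (2 * real n + 1)) - f p\<bar>)
          \<le> ?E (\<lambda>k. (m / (1 - b)) * \<bar>((2 * real k + 1) / (2 * real n + 1)) powr (1 - b) - p powr (1 - b)\<bar>)"
    proof (rule integral_mono_AE)
      show "AE k in measure_pmf (binomial_pmf n p). \<bar>f ((2 * real k + 1) / (2 * real n + 1)) - f p\<bar>
          \<le> (m / (1 - b)) * \<bar>((2 * real k + 1) / (2 * real n + 1)) powr (1 - b) - p powr (1 - b)\<bar>"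
      proof (rule AE_pmfI)
        fix k assume k: "k \<in> set_pmf (binomial_pmf n p)"
        have Y: "0 < (2 * real k + 1) / (2 * real n + 1)" "(2 * real k + 1) / (2 * real n + 1) \<le> 1"
          using k assms by (auto simp: add_pos_nonneg)
        show "\<bar>f ((2 * real k + 1) / (2 * real n + 1)) - f p\<bar>
          \<le> (m / (1 - b)) * \<bar>((2 * real k + 1) / (2 * real n + 1)) powr (1 - b) - p powr (1 - b)\<bar>"
          using key_abs[OF cont lip negN der b, of p "(2 * real k + 1) / (2 * real n + 1)"] Y assms
          by (simp add: mult.commute mult.left_commute)
      qed
    qed (use p01 in auto)
    also have "\<dots> = (m / (1 - b)) * ?E (\<lambda>k. \<bar>((2 * real k + 1) / (2 * real n + 1)) powr (1 - b) - p powr (1 - b)\<bar>)"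
      by (rule integral_mult_right_zero)
    also have "\<dots> \<le> (m / (1 - b)) * R"
      unfolding R_def using binom_dev_bound[OF assms b] mnn b by (intro mult_left_mono) auto
    also have "\<dots> = m * (R / (1 - b))" by simp
    finally show ?thesis using real by simp
  next
    case PInf
    have "R / (1 - b) > 0" using Rpos b by simp
    moreover have "R \<noteq> 0" "b \<noteq> 1" using Rpos b by auto
    ultimately show ?thesis using PInf by simp
  next
    case MInf
    then show ?thesis using good[OF x0] by simp
  qed
  then show "ereal (measure_pmf.expectation (binomial_pmf n p)
                (\<lambda>k. \<bar>f ((2 * real k + 1) / (2 * real n + 1)) - f p\<bar>))
         \<le> esssup (lebesgue_on {0<..1}) (\<lambda>x. ereal \<bar>x powr b * f' x\<bar>)
            * ereal ((p powr (-b/2) + p powr (1/2 - b)) * real n powr (-1/2) / (1 - b))"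
    unfolding M_def R_def .
qed

end
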